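(* Suppose the $n$ units are partitioned into $L$ blocks (matched subclasses), block $l$ containing $n_{l(0)}$ control units ($A=0$) and $n_{l(1)}$ treated units ($A=1$), $n_l=n_{l(0)}+n_{l(1)}$. Let $\sigma_0^2>0$, $\sigma^2=1+\sigma_0^2$, $\rho=1/\sigma^2$, and let $\boldsymbol\Sigma$ be block diagonal (units ordered by block) with $l$-th block $\boldsymbol\Sigma_l=\sigma^2[(1-\rho)\boldsymbol I_{n_l}+\rho\boldsymbol J_{n_l}]=\boldsymbol J_{n_l}+\sigma_0^2\boldsymbol I_{n_l}$, where $\boldsymbol J_m$ is the $m\times m$ all-ones matrix. Let $(\hat\mu,\hat\tau)'=\big[X'\boldsymbol\Sigma^{-1}X\big]^{-1}X'\boldsymbol\Sigma^{-1}\boldsymbol Y_n$ with $X=(\boldsymbol 1_n,\boldsymbol A_n)$. Let $\bar Y_{l(a)}$ be the mean outcome of group $a$ in block $l$, $q_l=(1-\rho+\rho n_l)^{-1}$, and (all sums over $l=1,\dots,L$) $$C_1=\textstyle\sum q_ln_l\cdot\sum q_ln_{l(1)}n_{l(0)}(\bar Y_{l(1)}-\bar Y_{l(0)}),\quad C_2=\sum q_ln_{l(0)}\cdot\sum q_ln_{l(1)}\bar Y_{l(1)}-\sum q_ln_{l(1)}\cdot\sum q_ln_{l(0)}\bar Y_{l(0)},$$ $$D_1=\textstyle\sum q_ln_l\cdot\sum q_ln_{l(1)}n_{l(0)},\qquad D_2=\sum q_ln_{l(1)}\cdot\sum q_ln_{l(0)}.$$ Assume $D_1>0$ and $D_2>0$.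 Then $$\hat\tau=\lambda\hat\tau_1+(1-\lambda)\hat\tau_0,\qquad \hat\tau_1=\frac{C_1}{D_1},\quad \hat\tau_0=\frac{C_2}{D_2},\quad \lambda=\frac{\rho D_1}{\rho D_1+(1-\rho)D_2}.$$
   Context: This is the generalized least squares (posterior mean for fixed covariance, flat prior) estimate of the treatment effect in the nonparametric GP model $\boldsymbol Y_n\sim MVN(\mu\boldsymbol 1_n+\tau\boldsymbol A_n,\boldsymbol\Sigma)$, $\boldsymbol\Sigma=\boldsymbol K+\sigma_0^2\boldsymbol I_n$, where $\boldsymbol K=(k_{ij})$ encodes a known matching structure with $k_{ij}=1$ if units $i,j$ are in the same block (matched) and $k_{ij}=0$ otherwise. $\boldsymbol A_n=(A_1,\dots,A_n)'$ is the treatment indicator vector. *)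

theory Defs
  imports "HOL-Analysis.Analysis"
begin

text \<open>Units are indexed by a finite type 'n, blocks by a finite type 'l;
  blk i is the block of unit i.  K has k_ij = 1 iff i and j are in the same block.\<close>

definition Kmat :: "('n::finite \<Rightarrow> 'l) \<Rightarrow> real^'n^'n" where
  "Kmat blk = (\<chi> i j. if blk i = blk j then 1 else 0)"

definition SigmaMat :: "('n::finite \<Rightarrow> 'l) \<Rightarrow> real \<Rightarrow> real^'n^'n" where
  "SigmaMat blk s0sq = Kmat blk + s0sq *\<^sub>R mat 1"

definition design :: "real^'n::finite \<Rightarrow> real^2^'n" where
  "design A = (\<chi> i j. if j = 0 then 1 else A $ i)"

definition gls :: "real^'n::finite^'n \<Rightarrow> real^'n \<Rightarrow> real^'n \<Rightarrow> real^2" where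
  "gls S A Y = matrix_inv (transpose (design A) ** matrix_inv S ** design A)
               *v ((transpose (design A) ** matrix_inv S) *v Y)"

definition tau_hat :: "real^'n::finite^'n \<Rightarrow> real^'n \<Rightarrow> real^'n \<Rightarrow> real" where
  "tau_hat S A Y = gls S A Y $ 1"

definition ncount :: "('n::finite \<Rightarrow> 'l) \<Rightarrow> real^'n \<Rightarrow> 'l \<Rightarrow> real \<Rightarrow> real" where
  "ncount blk A l a = real (card {i. blk i = l \<and> A $ i = a})"

definition nblock :: "('n::finite \<Rightarrow> 'l) \<Rightarrow> 'l \<Rightarrow> real" where
  "nblock blk l = real (card {i. blk i = l})"

definition Ybar :: "('n::finite \<Rightarrow> 'l) \<Rightarrow> real^'n \<Rightarrow> real^'n \<Rightarrow> 'l \<Rightarrow> real \<Rightarrow> real" where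
  "Ybar blk A Y l a = (\<Sum>i\<in>{i. blk i = l \<and> A $ i = a}. Y $ i) / ncount blk A l a"

end

theory Submission
  imports Defs
begin


lemma matrix_inv_eq:
  fixes M B :: "real^'n^'n"
  assumes "M ** B = mat 1"
  shows "matrix_inv M = B"
proof -
  have BM: "B ** M = mat 1" using assms matrix_left_right_inverse by blast
  have ex: "\<exists>A'. M ** A' = mat 1 \<and> A' ** M = mat 1" using assms BM by blast
  have inv: "M ** matrix_inv M = mat 1 \<and> matrix_inv M ** M = mat 1"
    unfolding matrix_inv_def using someI_ex[OF ex] .
  have "matrix_inv M = (B ** M) ** matrix_inv M" using BM by (simp add: matrix_mul_lid)
  also have "\<dots> = B ** (M ** matrix_inv M)" by (simp add: matrix_mul_assoc)
  also have "\<dots> = B" using inv by (simp add: matrix_mul_rid)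
  finally show ?thesis .
qed

definition wl :: "('n::finite \<Rightarrow> 'l) \<Rightarrow> real \<Rightarrow> 'l \<Rightarrow> real" where
  "wl blk s l = 1 / (s + nblock blk l)"

definition Sinv :: "('n::finite \<Rightarrow> 'l) \<Rightarrow> real \<Rightarrow> real^'n^'n" where
  "Sinv blk s = (\<chi> i j. (if i = j then 1/s else 0) - (if blk i = blk j then wl blk s (blk j) / s else 0))"

lemma Sigma_inv:
  fixes blk :: "'n::finite \<Rightarrow> 'l"
  assumes s: "s > 0"
  shows "matrix_inv (SigmaMat blk s) = Sinv blk s"
proof (rule matrix_inv_eq)
  show "SigmaMat blk s ** Sinv blk s = mat 1"
  proof (subst vec_eq_iff, intro allI, subst vec_eq_iff, intro allI)
    fix i k
    let ?c = "wl blk s (blk k) / s"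
    have N: "nblock blk (blk k) + s > 0" unfolding nblock_def using s by simp
    have "(SigmaMat blk s ** Sinv blk s) $ i $ k =
      (\<Sum>j\<in>UNIV. ((if blk i = blk j then 1 else 0) + s * (if i = j then 1 else 0)) *
          ((if j = k then 1/s else 0) - (if blk j = blk k then ?c else 0)))"
      by (simp add: matrix_matrix_mult_def SigmaMat_def Kmat_def Sinv_def mat_def)
    also have "\<dots> = (\<Sum>j\<in>UNIV. (if j = k then (if blk i = blk k then 1/s else 0) else 0)
        - (if blk j = blk k then (if blk i = blk k then ?c else 0) else 0)
        + (if j = i then (if i = k then 1 else 0) - (if blk i = blk k then s * ?c else 0) else 0))"
      using s by (intro sum.cong refl) (simp split: if_split_asm add: field_simps)
    also have "\<dots> = (\<Sum>j\<in>UNIV. (if j = k then (if blk i = blk k then 1/s else 0) else 0))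
        - (\<Sum>j\<in>UNIV. (if blk j = blk k then (if blk i = blk k then ?c else 0) else 0))
        + (\<Sum>j\<in>UNIV. (if j = i then (if i = k then 1 else 0) - (if blk i = blk k then s * ?c else 0) else 0))"
      by (simp only: sum.distrib sum_subtractf)
    also have "\<dots> = (if blk i = blk k then 1/s else 0) - nblock blk (blk k) * (if blk i = blk k then ?c else 0)
         + ((if i = k then 1 else 0) - (if blk i = blk k then s * ?c else 0))"
      by (simp add: sum.If_cases nblock_def Int_def)
    also have "\<dots> = mat 1 $ i $ k"
    proof -
      let ?N = "nblock blk (blk k)"
      let ?w = "wl blk s (blk k)"
      have hw: "(?N + s) * ?w = 1" using N unfolding wl_def by (simp add: add.commute)
      have e: "?N * (?w / s) + s * (?w / s) = 1 / s"
      proof -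
        have "?N * (?w / s) + s * (?w / s) = ((?N + s) * ?w) / s" by (simp add: distrib_right add_divide_distrib)
        also have "\<dots> = 1 / s" using hw by simp
        finally show ?thesis .
      qed
      show ?thesis using e by (auto simp: mat_def)
    qed
    finally show "(SigmaMat blk s ** Sinv blk s) $ i $ k = mat 1 $ i $ k" .
  qed
qed



definition bil :: "real^'n^'n \<Rightarrow> ('n::finite \<Rightarrow> real) \<Rightarrow> ('n \<Rightarrow> real) \<Rightarrow> real" where
  "bil S x y = (\<Sum>i\<in>UNIV. \<Sum>j\<in>UNIV. x i * S$i$j * y j)"

lemma quad_entry:
  fixes D :: "real^'m::finite^'n::finite" and S :: "real^'n^'n"
  shows "(transpose D ** S ** D)$a$b = bil S (\<lambda>i. D$i$a) (\<lambda>j. D$j$b)"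
proof -
  have "(transpose D ** S ** D)$a$b = (\<Sum>k\<in>UNIV. (\<Sum>i\<in>UNIV. D$i$a * S$i$k) * D$k$b)"
    by (simp add: matrix_matrix_mult_def transpose_def)
  also have "\<dots> = (\<Sum>k\<in>UNIV. \<Sum>i\<in>UNIV. D$i$a * S$i$k * D$k$b)"
    by (simp add: sum_distrib_right)
  also have "\<dots> = (\<Sum>i\<in>UNIV. \<Sum>k\<in>UNIV. D$i$a * S$i$k * D$k$b)"
    by (rule sum.swap)
  finally show ?thesis by (simp add: bil_def)
qed

lemma lin_entry:
  fixes D :: "real^'m::finite^'n::finite" and S :: "real^'n^'n"
  shows "((transpose D ** S) *v Y)$a = bil S (\<lambda>i. D$i$a) (\<lambda>j. Y$j)"
proof -
  have "((transpose D ** S) *v Y)$a = (\<Sum>k\<in>UNIV. (\<Sum>i\<in>UNIV. D$i$a * S$i$k) * Y$k)"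
    by (simp add: matrix_matrix_mult_def transpose_def matrix_vector_mult_def)
  also have "\<dots> = (\<Sum>k\<in>UNIV. \<Sum>i\<in>UNIV. D$i$a * S$i$k * Y$k)"
    by (simp add: sum_distrib_right)
  also have "\<dots> = (\<Sum>i\<in>UNIV. \<Sum>k\<in>UNIV. D$i$a * S$i$k * Y$k)"
    by (rule sum.swap)
  finally show ?thesis by (simp add: bil_def)
qed

definition G :: "('n::finite \<Rightarrow> 'l) \<Rightarrow> 'l \<Rightarrow> ('n \<Rightarrow> real) \<Rightarrow> real" where
  "G blk l x = (\<Sum>i\<in>{i. blk i = l}. x i)"

lemma group_sum:
  fixes blk :: "'n::finite \<Rightarrow> 'l::finite"
  shows "(\<Sum>i\<in>UNIV. f i) = (\<Sum>l\<in>UNIV. \<Sum>i\<in>{i. blk i = l}. f i)"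
  using sum.group[of "UNIV::'n set" "UNIV::'l set" blk f] by simp

lemma bil_Sinv:
  fixes blk :: "'n::finite \<Rightarrow> 'l::finite"
  shows "bil (Sinv blk s) x y = (\<Sum>l\<in>UNIV. (G blk l (\<lambda>i. x i * y i) - wl blk s l * G blk l x * G blk l y) / s)"
proof -
  have "bil (Sinv blk s) x y = (\<Sum>i\<in>UNIV. x i * y i / s - x i * (wl blk s (blk i) / s) * G blk (blk i) y)"
  proof (unfold bil_def, rule sum.cong[OF refl])
    fix i
    have "(\<Sum>j\<in>UNIV. x i * Sinv blk s $ i $ j * y j)
       = (\<Sum>j\<in>UNIV. (if j = i then x i * y i / s else 0) - (if blk j = blk i then x i * (wl blk s (blk i) / s) * y j else 0))"
      by (rule sum.cong[OF refl]) (auto simp: Sinv_def algebra_simps diff_divide_distrib)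
    also have "\<dots> = x i * y i / s - x i * (wl blk s (blk i) / s) * G blk (blk i) y"
      by (simp add: sum_subtractf sum.If_cases G_def Int_def sum_distrib_left)
    finally show "(\<Sum>j\<in>UNIV. x i * Sinv blk s $ i $ j * y j) = x i * y i / s - x i * (wl blk s (blk i) / s) * G blk (blk i) y" .
  qed
  also have "\<dots> = (\<Sum>l\<in>UNIV. \<Sum>i\<in>{i. blk i = l}. x i * y i / s - x i * (wl blk s l / s) * G blk l y)"
    by (subst group_sum[of _ blk]) (auto intro!: sum.cong)
  also have "\<dots> = (\<Sum>l\<in>UNIV. (G blk l (\<lambda>i. x i * y i) - wl blk s l * G blk l x * G blk l y) / s)"
  proof (rule sum.cong[OF refl])
    fix l
    have "(\<Sum>i\<in>{i. blk i = l}. x i * y i / s - x i * (wl blk s l / s) * G blk l y)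
       = (\<Sum>i\<in>{i. blk i = l}. x i * y i) / s - (\<Sum>i\<in>{i. blk i = l}. x i) * (wl blk s l / s) * G blk l y"
      by (simp only: sum_subtractf sum_divide_distrib sum_distrib_right)
    also have "\<dots> = (G blk l (\<lambda>i. x i * y i) - wl blk s l * G blk l x * G blk l y) / s"
      by (simp add: G_def diff_divide_distrib)
    finally show "(\<Sum>i\<in>{i. blk i = l}. x i * y i / s - x i * (wl blk s l / s) * G blk l y)
       = (G blk l (\<lambda>i. x i * y i) - wl blk s l * G blk l x * G blk l y) / s" .
  qed
  finally show ?thesis .
qed


lemma alg:
  fixes s R0 R1 Q T U0 U1 \<rho> C1 C2 D1 D2 lam :: real
  assumes s: "s > 0"
    and rho: "\<rho> = 1/(1+s)"
    and C1: "C1 = ((1+s)*(R0+R1))*((1+s)*T)"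
    and C2: "C2 = ((1+s)*R0)*((1+s)*U1) - ((1+s)*R1)*((1+s)*U0)"
    and D1: "D1 = ((1+s)*(R0+R1))*((1+s)*Q)"
    and D2: "D2 = ((1+s)*R1)*((1+s)*R0)"
    and D1p: "D1 > 0" and D2p: "D2 > 0"
    and lam: "lam = \<rho> * D1 / (\<rho> * D1 + (1 - \<rho>) * D2)"
  shows "((R0+R1)*(U1+T/s) - R1*(U1+U0)) / ((R1+Q/s)*(R0+R1) - R1*R1) = lam*(C1/D1) + (1-lam)*(C2/D2)"
proof -
  have r0: "\<rho> > 0" "1 - \<rho> > 0"
  proof -
    show "\<rho> > 0" using s rho by simp
    have "\<rho> < 1" using s rho by (simp add: divide_less_eq)
    then show "1 - \<rho> > 0" by simp
  qed
  have rho': "1 - \<rho> = s/(1+s)" unfolding rho using s by (simp add: field_simps)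
  have s1: "1 + s \<noteq> 0" "(1 + s)^2 \<noteq> 0" "1 + (s * s + s * 2) \<noteq> 0" using s by (auto simp: add_pos_pos) (smt (verit) mult_nonneg_nonneg)
  define E where "E = \<rho> * D1 + (1 - \<rho>) * D2"
  have Ep: "E > 0" unfolding E_def using r0 D1p D2p by (intro add_pos_pos mult_pos_pos) auto
  have l1: "1 - lam = (1-\<rho>)*D2/E" unfolding lam E_def[symmetric] using Ep by (simp add: field_simps E_def)
  have "lam*(C1/D1) + (1-lam)*(C2/D2) = (\<rho>*C1 + (1-\<rho>)*C2)/E"
    unfolding l1 unfolding lam E_def[symmetric] using Ep D1p D2p by (simp add: field_simps)
  also have "\<rho>*C1 + (1-\<rho>)*C2 = (1+s)*((R0+R1)*T + s*(R0*U1 - R1*U0))"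
    unfolding rho' unfolding rho C1 C2 using s s1 by (simp add: field_simps power2_eq_square)
  also have "E = (1+s)*((R0+R1)*Q + s*(R0*R1))"
    unfolding E_def rho' unfolding rho D1 D2 using s s1 by (simp add: field_simps)
  also have "(1+s)*((R0+R1)*T + s*(R0*U1 - R1*U0)) / ((1+s)*((R0+R1)*Q + s*(R0*R1)))
     = ((R0+R1)*T + s*(R0*U1 - R1*U0)) / ((R0+R1)*Q + s*(R0*R1))"
    using s by simp
  also have "\<dots> = ((R0+R1)*(U1+T/s) - R1*(U1+U0)) / ((R1+Q/s)*(R0+R1) - R1*R1)"
  proof -
    have "(R0+R1)*(U1+T/s) - R1*(U1+U0) = ((R0+R1)*T + s*(R0*U1 - R1*U0))/s"
      using s by (simp add: field_simps)
    moreover have "(R1+Q/s)*(R0+R1) - R1*R1 = ((R0+R1)*Q + s*(R0*R1))/s"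
      using s by (simp add: field_simps)
    ultimately show ?thesis using s by simp
  qed
  finally show ?thesis by simp
qed



lemma two_ne: "(2::2) \<noteq> 1" "(2::2) = 0" "(1::2) \<noteq> 0" by simp_all

lemma inv22:
  fixes M :: "real^2^2" and r :: "real^2"
  assumes d: "M$1$1*M$2$2 - M$1$2*M$2$1 \<noteq> 0"
  shows "(matrix_inv M *v r)$1 = (M$2$2*r$1 - M$1$2*r$2)/(M$1$1*M$2$2 - M$1$2*M$2$1)"
proof -
  obtain dd where dd: "dd = M$1$1*M$2$2 - M$1$2*M$2$1" by blast
  have dnz: "dd \<noteq> 0" using d dd by simp
  define B :: "real^2^2" where "B = (\<chi> i j. (if i = 1 then (if j = 1 then M$2$2 else - M$1$2)
      else (if j = 1 then - M$2$1 else M$1$1)) / dd)"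
  have B: "B$1$1 = M$2$2/dd" "B$1$2 = - M$1$2/dd" "B$2$1 = - M$2$1/dd" "B$2$2 = M$1$1/dd"
    unfolding B_def by simp_all
  have e11: "M$1$1 * (M$2$2/dd) + M$1$2 * (- M$2$1/dd) = 1"
  proof -
    have "M$1$1 * (M$2$2/dd) + M$1$2 * (- M$2$1/dd) = (M$1$1*M$2$2 - M$1$2*M$2$1)/dd" by (simp add: diff_divide_distrib)
    also have "\<dots> = dd/dd" using dd by simp
    finally have "M$1$1 * (M$2$2/dd) + M$1$2 * (- M$2$1/dd) = dd/dd" .
    thus ?thesis using dnz by simp
  qed
  have e22: "M$2$1 * (- M$1$2/dd) + M$2$2 * (M$1$1/dd) = 1"
  proof -
    have "M$2$1 * (- M$1$2/dd) + M$2$2 * (M$1$1/dd) = (M$1$1*M$2$2 - M$1$2*M$2$1)/dd" by (simp add: diff_divide_distrib algebra_simps)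
    also have "\<dots> = dd/dd" using dd by simp
    finally have "M$2$1 * (- M$1$2/dd) + M$2$2 * (M$1$1/dd) = dd/dd" .
    thus ?thesis using dnz by simp
  qed
  have e12: "M$1$1 * (- M$1$2/dd) + M$1$2 * (M$1$1/dd) = 0" by simp
  have e21: "M$2$1 * (M$2$2/dd) + M$2$2 * (- M$2$1/dd) = 0" by simp
  have "M ** B = mat 1"
    unfolding vec_eq_iff forall_2 matrix_matrix_mult_def
    by (simp only: vec_lambda_beta sum_2 B e11 e22 e12 e21 mat_def) simp
  hence "matrix_inv M = B" by (rule matrix_inv_eq)
  thus ?thesis by (simp add: B matrix_vector_mult_def sum_2 diff_divide_distrib dd[symmetric])
qed



lemma split01:
  fixes blk :: "'n::finite \<Rightarrow> 'l" and A :: "real^'n"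
  assumes A01: "\<forall>i. A $ i = 0 \<or> A $ i = 1"
  shows "G blk l f = (\<Sum>i\<in>{i. blk i = l \<and> A$i = 1}. f i) + (\<Sum>i\<in>{i. blk i = l \<and> A$i = 0}. f i)"
proof -
  have "{i. blk i = l} = {i. blk i = l \<and> A$i = 1} \<union> {i. blk i = l \<and> A$i = 0}" using A01 by auto
  then have "G blk l f = sum f ({i. blk i = l \<and> A$i = 1} \<union> {i. blk i = l \<and> A$i = 0})"
    unfolding G_def by simp
  also have "\<dots> = sum f {i. blk i = l \<and> A$i = 1} + sum f {i. blk i = l \<and> A$i = 0}"
    by (rule sum.union_disjoint) auto
  finally show ?thesis .
qed

lemma ncount_Ybar:
  "ncount blk A l a * Ybar blk A Y l a = (\<Sum>i\<in>{i. blk i = l \<and> A $ i = a}. Y $ i)"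
proof (cases "ncount blk A l a = 0")
  case True
  then have E: "{i. blk i = l \<and> A $ i = a} = {}" unfolding ncount_def by simp
  show ?thesis unfolding E using True by simp
next
  case False
  then show ?thesis unfolding Ybar_def by simp
qed

lemma blockfacts:
  fixes blk :: "'n::finite \<Rightarrow> 'l" and A Y :: "real^'n"
  assumes A01: "\<forall>i. A $ i = 0 \<or> A $ i = 1"
  shows "G blk l (\<lambda>i. 1) = ncount blk A l 0 + ncount blk A l 1"
    and "G blk l (\<lambda>i. A$i) = ncount blk A l 1"
    and "G blk l (\<lambda>i. A$i * A$i) = ncount blk A l 1"
    and "G blk l (\<lambda>i. A$i * Y$i) = ncount blk A l 1 * Ybar blk A Y l 1"
    and "G blk l (\<lambda>i. Y$i) = ncount blk A l 1 * Ybar blk A Y l 1 + ncount blk A l 0 * Ybar blk A Y l 0"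
    and "nblock blk l = ncount blk A l 0 + ncount blk A l 1"
proof -
  have c: "\<And>a. (\<Sum>i\<in>{i. blk i = l \<and> A$i = a}. (1::real)) = ncount blk A l a"
    by (simp add: ncount_def)
  have s1: "\<And>g f. (\<Sum>i\<in>{i. blk i = l \<and> A$i = 1}. g (A$i) i) = (\<Sum>i\<in>{i. blk i = l \<and> A$i = 1}. g 1 i)"
    by (rule sum.cong) auto
  have s0: "\<And>g f. (\<Sum>i\<in>{i. blk i = l \<and> A$i = 0}. g (A$i) i) = (\<Sum>i\<in>{i. blk i = l \<and> A$i = 0}. g 0 i)"
    by (rule sum.cong) auto
  show "G blk l (\<lambda>i. 1) = ncount blk A l 0 + ncount blk A l 1"
    using split01[OF A01, of blk l "\<lambda>i. 1"] c by simp
  show "G blk l (\<lambda>i. A$i) = ncount blk A l 1"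
    using split01[OF A01, of blk l "\<lambda>i. A$i"] c s1[of "\<lambda>a i. a"] s0[of "\<lambda>a i. a"] by simp
  show "G blk l (\<lambda>i. A$i * A$i) = ncount blk A l 1"
    using split01[OF A01, of blk l "\<lambda>i. A$i * A$i"] c s1[of "\<lambda>a i. a*a"] s0[of "\<lambda>a i. a*a"] by simp
  show "G blk l (\<lambda>i. A$i * Y$i) = ncount blk A l 1 * Ybar blk A Y l 1"
    using split01[OF A01, of blk l "\<lambda>i. A$i * Y$i"] ncount_Ybar[of blk A l 1 Y]
      s1[of "\<lambda>a i. a*Y$i"] s0[of "\<lambda>a i. a*Y$i"] by simp
  show "G blk l (\<lambda>i. Y$i) = ncount blk A l 1 * Ybar blk A Y l 1 + ncount blk A l 0 * Ybar blk A Y l 0"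
    using split01[OF A01, of blk l "\<lambda>i. Y$i"] ncount_Ybar[of blk A l 1 Y] ncount_Ybar[of blk A l 0 Y] by simp
  show "nblock blk l = ncount blk A l 0 + ncount blk A l 1"
    using split01[OF A01, of blk l "\<lambda>i. 1"] c by (simp add: nblock_def G_def)
qed


lemma keyK: fixes X P K w s a b :: real
  assumes "X = P + K * (1 - w*(s+(a+b)))" "w*(s+(a+b)) = 1"
  shows "X / s = P / s" using assms by simp

context fixes w s a b y1 y0 :: real
  assumes h: "w*(s+(a+b)) = 1" and s: "s \<noteq> 0"
begin
lemma blk1: "((a+b) - w*(a+b)*(a+b))/s = w*a + w*b"
proof -
  have "((a+b) - w*(a+b)*(a+b))/s = ((w*a + w*b) * s)/s"
    by (rule keyK[OF _ h, where K="a+b"]) (simp add: algebra_simps)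
  thus ?thesis using s by simp
qed
lemma blk2: "(b - w*b*(a+b))/s = w*b"
proof -
  have "(b - w*b*(a+b))/s = ((w*b) * s)/s"
    by (rule keyK[OF _ h, where K="b"]) (simp add: algebra_simps)
  thus ?thesis using s by simp
qed
lemma blk3: "(b - w*(a+b)*b)/s = w*b"
proof -
  have "(b - w*(a+b)*b)/s = ((w*b) * s)/s"
    by (rule keyK[OF _ h, where K="b"]) (simp add: algebra_simps)
  thus ?thesis using s by simp
qed
lemma blk4: "(b - w*b*b)/s = w*b + w*b*a/s"
proof -
  have "(b - w*b*b)/s = ((w*b) * s + w*b*a)/s"
    by (rule keyK[OF _ h, where K="b"]) (simp add: algebra_simps)
  thus ?thesis using s by (simp add: add_divide_distrib)
qed
lemma blk5: "(b*y1 - w*b*(b*y1 + a*y0))/s = w*b*y1 + w*b*a*(y1 - y0)/s"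
proof -
  have "(b*y1 - w*b*(b*y1 + a*y0))/s = ((w*b*y1) * s + w*b*a*(y1 - y0))/s"
    by (rule keyK[OF _ h, where K="b*y1"]) (simp add: algebra_simps)
  thus ?thesis using s by (simp add: add_divide_distrib)
qed
lemma blk6: "((b*y1 + a*y0) - w*(a+b)*(b*y1 + a*y0))/s = w*b*y1 + w*a*y0"
proof -
  have "((b*y1 + a*y0) - w*(a+b)*(b*y1 + a*y0))/s = ((w*b*y1 + w*a*y0) * s)/s"
    by (rule keyK[OF _ h, where K="b*y1 + a*y0"]) (simp add: algebra_simps)
  thus ?thesis using s by simp
qed
end



theorem mainTheorem3:
  fixes blk :: "'n::finite \<Rightarrow> 'l::finite"
    and A Y :: "real^'n"
    and s0sq :: real
  assumes A01: "\<forall>i. A $ i = 0 \<or> A $ i = 1"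
    and s0pos: "s0sq > 0"
  defines "\<rho> \<equiv> 1 / (1 + s0sq)"
  defines "q \<equiv> (\<lambda>l. 1 / (1 - \<rho> + \<rho> * nblock blk l))"
    and "n0 \<equiv> (\<lambda>l. ncount blk A l 0)"
    and "n1 \<equiv> (\<lambda>l. ncount blk A l 1)"
    and "Y0 \<equiv> (\<lambda>l. Ybar blk A Y l 0)"
    and "Y1 \<equiv> (\<lambda>l. Ybar blk A Y l 1)"
  defines "C1 \<equiv> (\<Sum>l\<in>UNIV. q l * nblock blk l) *
                 (\<Sum>l\<in>UNIV. q l * n1 l * n0 l * (Y1 l - Y0 l))"
  defines "C2 \<equiv> (\<Sum>l\<in>UNIV. q l * n0 l) * (\<Sum>l\<in>UNIV. q l * n1 l * Y1 l)
             - (\<Sum>l\<in>UNIV. q l * n1 l) * (\<Sum>l\<in>UNIV. q l * n0 l * Y0 l)"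
  defines "D1 \<equiv> (\<Sum>l\<in>UNIV. q l * nblock blk l) * (\<Sum>l\<in>UNIV. q l * n1 l * n0 l)"
  defines "D2 \<equiv> (\<Sum>l\<in>UNIV. q l * n1 l) * (\<Sum>l\<in>UNIV. q l * n0 l)"
  assumes D1pos: "D1 > 0" and D2pos: "D2 > 0"
  defines "lam \<equiv> \<rho> * D1 / (\<rho> * D1 + (1 - \<rho>) * D2)"
  shows "tau_hat (SigmaMat blk s0sq) A Y = lam * (C1 / D1) + (1 - lam) * (C2 / D2)"
proof -
  let ?s = s0sq
  define w where "w = (\<lambda>l. wl blk s0sq l)"
  have bf1: "\<And>l. G blk l (\<lambda>i. 1) = n0 l + n1 l"
     "\<And>l. G blk l (\<lambda>i. A$i) = n1 l"
     "\<And>l. G blk l (\<lambda>i. A$i * A$i) = n1 l"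
     "\<And>l. G blk l (\<lambda>i. A$i * Y$i) = n1 l * Y1 l"
     "\<And>l. nblock blk l = n0 l + n1 l"
    unfolding n0_def n1_def Y0_def Y1_def by (simp_all add: blockfacts(1-4,6)[OF A01])
  have bf2: "\<And>l. G blk l (\<lambda>i. Y$i) = n1 l * Y1 l + n0 l * Y0 l"
    unfolding n0_def n1_def Y0_def Y1_def by (simp add: blockfacts(5)[OF A01])
  note bf = bf1 bf2
  have nn: "\<And>l. n0 l \<ge> 0" "\<And>l. n1 l \<ge> 0" unfolding n0_def n1_def ncount_def by auto
  have pos: "\<And>l. s0sq + (n0 l + n1 l) > 0" using nn s0pos by (smt (verit))
  have pnz: "\<And>l. s0sq + (n0 l + n1 l) \<noteq> 0" using pos by (metis less_irrefl)
  have hw1: "\<And>l. w l * (s0sq + (n0 l + n1 l)) = 1" using pnz unfolding w_def wl_def bf by simp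
  have s0nz: "s0sq \<noteq> 0" using s0pos by simp
  have hw: "\<And>l. w l = 1 / (s0sq + (n0 l + n1 l))" unfolding w_def wl_def using bf by simp
  have hq: "\<And>l. q l = (1 + s0sq) * w l"
  proof -
    fix l
    have p1: "1 + s0sq > 0" using s0pos by simp
    have e: "1 - \<rho> + \<rho> * nblock blk l = (s0sq + (n0 l + n1 l)) / (1 + s0sq)"
    proof -
      have p2: "1 + (s0sq * s0sq + s0sq * 2) \<noteq> 0" using s0pos by (smt (verit) mult_nonneg_nonneg)
      show ?thesis unfolding \<rho>_def bf using p1 p2 by (simp add: field_simps)
    qed
    show "q l = (1 + s0sq) * w l"
      unfolding q_def e hw by simp
  qed
  define R0 where "R0 = (\<Sum>l\<in>UNIV. w l * n0 l)"
  define R1 where "R1 = (\<Sum>l\<in>UNIV. w l * n1 l)"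
  define Q where "Q = (\<Sum>l\<in>UNIV. w l * n1 l * n0 l)"
  define T where "T = (\<Sum>l\<in>UNIV. w l * n1 l * n0 l * (Y1 l - Y0 l))"
  define U1 where "U1 = (\<Sum>l\<in>UNIV. w l * n1 l * Y1 l)"
  define U0 where "U0 = (\<Sum>l\<in>UNIV. w l * n0 l * Y0 l)"
  have d1: "\<And>i. design A $ i $ 1 = A$i" and d2: "\<And>i. design A $ i $ 2 = 1"
    by (simp_all add: design_def)
  let ?M = "transpose (design A) ** Sinv blk s0sq ** design A"
  let ?r = "(transpose (design A) ** Sinv blk s0sq) *v Y"
  have wf: "\<And>l. wl blk s0sq l = w l" unfolding w_def by simp
  have M22: "?M$2$2 = R0 + R1"
  proof -
    have "?M$2$2 = (\<Sum>l\<in>UNIV. ((n0 l + n1 l) - w l * (n0 l + n1 l) * (n0 l + n1 l)) / s0sq)"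
      by (simp add: quad_entry bil_Sinv d2 bf wf)
    also have "\<dots> = (\<Sum>l\<in>UNIV. w l * n0 l + w l * n1 l)"
      by (rule sum.cong[OF refl]) (rule blk1[OF hw1 s0nz])
    finally show ?thesis by (simp add: sum.distrib R0_def R1_def)
  qed
  have M12: "?M$1$2 = R1"
  proof -
    have "?M$1$2 = (\<Sum>l\<in>UNIV. (n1 l - w l * n1 l * (n0 l + n1 l)) / s0sq)"
      by (simp add: quad_entry bil_Sinv d1 d2 bf wf)
    also have "\<dots> = (\<Sum>l\<in>UNIV. w l * n1 l)"
      by (rule sum.cong[OF refl]) (rule blk2[OF hw1 s0nz])
    finally show ?thesis by (simp add: R1_def)
  qed
  have M21: "?M$2$1 = R1"
  proof -
    have "?M$2$1 = (\<Sum>l\<in>UNIV. (n1 l - w l * (n0 l + n1 l) * n1 l) / s0sq)"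
      by (simp add: quad_entry bil_Sinv d1 d2 bf wf)
    also have "\<dots> = (\<Sum>l\<in>UNIV. w l * n1 l)"
      by (rule sum.cong[OF refl]) (rule blk3[OF hw1 s0nz])
    finally show ?thesis by (simp add: R1_def)
  qed
  have M11: "?M$1$1 = R1 + Q / s0sq"
  proof -
    have "?M$1$1 = (\<Sum>l\<in>UNIV. (n1 l - w l * n1 l * n1 l) / s0sq)"
      by (simp add: quad_entry bil_Sinv d1 bf wf)
    also have "\<dots> = (\<Sum>l\<in>UNIV. w l * n1 l + w l * n1 l * n0 l / s0sq)"
      by (rule sum.cong[OF refl]) (rule blk4[OF hw1 s0nz])
    finally show ?thesis by (simp add: sum.distrib R1_def Q_def sum_divide_distrib)
  qed
  have r1: "?r$1 = U1 + T / s0sq"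
  proof -
    have "?r$1 = (\<Sum>l\<in>UNIV. (n1 l * Y1 l - w l * n1 l * (n1 l * Y1 l + n0 l * Y0 l)) / s0sq)"
      by (simp add: lin_entry bil_Sinv d1 bf wf)
    also have "\<dots> = (\<Sum>l\<in>UNIV. w l * n1 l * Y1 l + w l * n1 l * n0 l * (Y1 l - Y0 l) / s0sq)"
      by (rule sum.cong[OF refl]) (rule blk5[OF hw1 s0nz])
    finally show ?thesis by (simp add: sum.distrib U1_def T_def sum_divide_distrib)
  qed
  have r2: "?r$2 = U1 + U0"
  proof -
    have "?r$2 = (\<Sum>l\<in>UNIV. ((n1 l * Y1 l + n0 l * Y0 l) - w l * (n0 l + n1 l) * (n1 l * Y1 l + n0 l * Y0 l)) / s0sq)"
      by (simp add: lin_entry bil_Sinv d2 bf wf)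
    also have "\<dots> = (\<Sum>l\<in>UNIV. w l * n1 l * Y1 l + w l * n0 l * Y0 l)"
      by (rule sum.cong[OF refl]) (rule blk6[OF hw1 s0nz])
    finally show ?thesis by (simp add: sum.distrib U1_def U0_def)
  qed
  have SN: "(\<Sum>l\<in>UNIV. q l * nblock blk l) = (1+s0sq)*(R0+R1)"
  proof -
    have "(\<Sum>l\<in>UNIV. q l * nblock blk l) = (\<Sum>l\<in>UNIV. (1+s0sq)*(w l * n0 l) + (1+s0sq)*(w l * n1 l))"
      by (rule sum.cong[OF refl]) (simp add: hq bf algebra_simps)
    thus ?thesis by (simp add: sum.distrib sum_distrib_left[symmetric] R0_def R1_def distrib_left)
  qed
  have S10Y: "(\<Sum>l\<in>UNIV. q l * n1 l * n0 l * (Y1 l - Y0 l)) = (1+s0sq)*T"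
    by (simp add: hq T_def sum_distrib_left mult.assoc)
  have S10: "(\<Sum>l\<in>UNIV. q l * n1 l * n0 l) = (1+s0sq)*Q"
    by (simp add: hq Q_def sum_distrib_left mult.assoc)
  have S0: "(\<Sum>l\<in>UNIV. q l * n0 l) = (1+s0sq)*R0"
    by (simp add: hq R0_def sum_distrib_left mult.assoc)
  have S1: "(\<Sum>l\<in>UNIV. q l * n1 l) = (1+s0sq)*R1"
    by (simp add: hq R1_def sum_distrib_left mult.assoc)
  have S1Y: "(\<Sum>l\<in>UNIV. q l * n1 l * Y1 l) = (1+s0sq)*U1"
    by (simp add: hq U1_def sum_distrib_left mult.assoc)
  have S0Y: "(\<Sum>l\<in>UNIV. q l * n0 l * Y0 l) = (1+s0sq)*U0"
    by (simp add: hq U0_def sum_distrib_left mult.assoc)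
  have C1eq: "C1 = ((1+s0sq)*(R0+R1))*((1+s0sq)*T)" unfolding C1_def SN S10Y ..
  have C2eq: "C2 = ((1+s0sq)*R0)*((1+s0sq)*U1) - ((1+s0sq)*R1)*((1+s0sq)*U0)"
    unfolding C2_def S0 S1Y S1 S0Y ..
  have D1eq: "D1 = ((1+s0sq)*(R0+R1))*((1+s0sq)*Q)" unfolding D1_def SN S10 ..
  have D2eq: "D2 = ((1+s0sq)*R1)*((1+s0sq)*R0)" unfolding D2_def S1 S0 ..
  have rho: "\<rho> = 1/(1+s0sq)" by (simp add: \<rho>_def)
  have lamq: "lam = \<rho> * D1 / (\<rho> * D1 + (1 - \<rho>) * D2)" by (simp add: lam_def)
  have c2: "(1+s0sq)^2 > 0" using s0pos by simp
  have pQ: "(R0+R1)*Q > 0"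
  proof -
    have "D1 = (1+s0sq)^2 * ((R0+R1)*Q)" unfolding D1eq by (simp add: power2_eq_square algebra_simps)
    thus ?thesis using D1pos c2 by (simp add: zero_less_mult_iff)
  qed
  have pR: "R0*R1 > 0"
  proof -
    have "D2 = (1+s0sq)^2 * (R0*R1)" unfolding D2eq by (simp add: power2_eq_square algebra_simps)
    thus ?thesis using D2pos c2 by (simp add: zero_less_mult_iff)
  qed
  have det: "(R1 + Q/s0sq)*(R0+R1) - R1*R1 = R0*R1 + (R0+R1)*Q/s0sq"
    by (simp add: algebra_simps)
  have detp: "(R1 + Q/s0sq)*(R0+R1) - R1*R1 \<noteq> 0"
  proof -
    have "(R0+R1)*Q/s0sq > 0" using pQ s0pos by simp
    thus ?thesis unfolding det using pR by linarith
  qed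
  have tau: "tau_hat (SigmaMat blk s0sq) A Y = (?M$2$2 * ?r$1 - ?M$1$2 * ?r$2)/(?M$1$1*?M$2$2 - ?M$1$2*?M$2$1)"
    unfolding tau_hat_def gls_def Sigma_inv[OF s0pos]
    by (rule inv22) (use detp in \<open>simp add: M11 M22 M12 M21\<close>)
  show ?thesis unfolding tau M11 M22 M12 M21 r1 r2
    by (rule alg[OF s0pos rho C1eq C2eq D1eq D2eq D1pos D2pos lamq])
qed

end
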